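(* Let $x_0\in(0,1)$ and let $a,b$ satisfy one of the conditions (H2), (H3), (H4) of the context. Then there exists a constant $\overline C_{HP}>0$ such that \[\int_0^1\frac{u^2}{ab}\,dx\le\overline C_{HP}\int_0^1(u')^2dx\] for every $u\in\mathcal K_{a,b}:=\{u\in L^2_{\frac1a}(0,1)\cap H^1(0,1): u/\sqrt{ab}\in L^2(0,1)\}$ with $u'(0)=u'(1)=0$.
   Context: $a,b:[0,1]\to\mathbb R$ with $a(x_0)=b(x_0)=0$, $a,b>0$ on $[0,1]\setminus\{x_0\}$. $L^2_{\frac1a}(0,1)=\{u\in L^2:\int u^2/a<\infty\}$. Degeneracy types: (WWD) $a,b\in W^{1,1}(0,1)$ and $K_1,K_2\in(0,1)$ with $(x-x_0)a'\le K_1a$, $(x-x_0)b'\le K_2b$ a.e.; (SSD) $a,b\in W^{1,\infty}(0,1)$ with the same inequalities and $K_1,K_2\in[1,2)$; (WSD) $a\in W^{1,1}$, $b\in W^{1,\infty}$, $K_1\in(0,1)$, $K_2\in[1,2)$; (SWD) $a\in W^{1,\infty}$, $b\in W^{1,1}$, $K_1\in[1,2)$, $K_2\in(0,1)$. (H2): (WWD) with $1\le K_1+K_2\le2$ and there exist $c_1,c_2>0$ with $|x-x_0|^{K_1}\ge c_1a(x)$, $|x-x_0|^{K_2}\ge c_2b(x)$ for all $x\in[0,1]$; (H3): (WSD) or (SWD) with $K_1+K_2\le2$ and such $c_1,c_2$; (H4): (SSD) with $K_1=K_2=1$. *)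

theory Defs
  imports "HOL-Analysis.Analysis"
begin

text \<open>Absolute continuity on [0,1] with (weak) derivative g in L^1(0,1):
  u x = u 0 + int_0^x g for all x in [0,1].\<close>
definition weak_deriv_01 :: "(real \<Rightarrow> real) \<Rightarrow> (real \<Rightarrow> real) \<Rightarrow> bool" where
  "weak_deriv_01 u g \<longleftrightarrow> g absolutely_integrable_on {0..1} \<and>
     (\<forall>x\<in>{0..1}. u x = u 0 + integral {0..x} g)"

definition W11_01 :: "(real \<Rightarrow> real) \<Rightarrow> (real \<Rightarrow> real) \<Rightarrow> bool" where
  "W11_01 a a' \<longleftrightarrow> weak_deriv_01 a a'"

definition W1inf_01 :: "(real \<Rightarrow> real) \<Rightarrow> (real \<Rightarrow> real) \<Rightarrow> bool" where
  "W1inf_01 a a' \<longleftrightarrow> weak_deriv_01 a a' \<and>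
     (\<exists>M. AE x in lebesgue. x \<in> {0..1} \<longrightarrow> \<bar>a' x\<bar> \<le> M)"

definition H1_01 :: "(real \<Rightarrow> real) \<Rightarrow> (real \<Rightarrow> real) \<Rightarrow> bool" where
  "H1_01 u g \<longleftrightarrow> (\<lambda>x. (u x)\<^sup>2) integrable_on {0..1} \<and> weak_deriv_01 u g \<and>
     (\<lambda>x. (g x)\<^sup>2) integrable_on {0..1}"

definition weakly_deg :: "(real \<Rightarrow> real) \<Rightarrow> real \<Rightarrow> real \<Rightarrow> bool" where
  "weakly_deg a x0 K \<longleftrightarrow> 0 < K \<and> K < 1 \<and>
     (\<exists>a'. W11_01 a a' \<and> (AE x in lebesgue. x \<in> {0..1} \<longrightarrow> (x - x0) * a' x \<le> K * a x))"

definition strongly_deg :: "(real \<Rightarrow> real) \<Rightarrow> real \<Rightarrow> real \<Rightarrow> bool" where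
  "strongly_deg a x0 K \<longleftrightarrow> 1 \<le> K \<and> K < 2 \<and>
     (\<exists>a'. W1inf_01 a a' \<and> (AE x in lebesgue. x \<in> {0..1} \<longrightarrow> (x - x0) * a' x \<le> K * a x))"

definition WWD where "WWD a b x0 K1 K2 \<longleftrightarrow> weakly_deg a x0 K1 \<and> weakly_deg b x0 K2"
definition SSD where "SSD a b x0 K1 K2 \<longleftrightarrow> strongly_deg a x0 K1 \<and> strongly_deg b x0 K2"
definition WSD where "WSD a b x0 K1 K2 \<longleftrightarrow> weakly_deg a x0 K1 \<and> strongly_deg b x0 K2"
definition SWD where "SWD a b x0 K1 K2 \<longleftrightarrow> strongly_deg a x0 K1 \<and> weakly_deg b x0 K2"

definition power_bounds :: "(real \<Rightarrow> real) \<Rightarrow> (real \<Rightarrow> real) \<Rightarrow> real \<Rightarrow> real \<Rightarrow> real \<Rightarrow> bool" where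
  "power_bounds a b x0 K1 K2 \<longleftrightarrow> (\<exists>c1 c2. c1 > 0 \<and> c2 > 0 \<and>
     (\<forall>x\<in>{0..1}. \<bar>x - x0\<bar> powr K1 \<ge> c1 * a x \<and> \<bar>x - x0\<bar> powr K2 \<ge> c2 * b x))"

definition H2 where "H2 a b x0 \<longleftrightarrow> (\<exists>K1 K2. WWD a b x0 K1 K2 \<and> 1 \<le> K1 + K2 \<and> K1 + K2 \<le> 2
     \<and> power_bounds a b x0 K1 K2)"
definition H3 where "H3 a b x0 \<longleftrightarrow> (\<exists>K1 K2. (WSD a b x0 K1 K2 \<or> SWD a b x0 K1 K2) \<and> K1 + K2 \<le> 2
     \<and> power_bounds a b x0 K1 K2)"
definition H4 where "H4 a b x0 \<longleftrightarrow> SSD a b x0 1 1"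

end

theory Submission
  imports Defs
begin



lemma a1: "(y::real) > 0 \<Longrightarrow> (y powr (1/4))^2 = sqrt y"
proof -
  assume "y > 0"
  have "(y powr (1/4))^2 = y powr (1/4) * y powr (1/4)" by (simp add: power2_eq_square)
  also have "\<dots> = y powr (1/2)" by (simp add: powr_add[symmetric])
  finally show ?thesis using powr_half_sqrt[of y] \<open>y>0\<close> by simp
qed
lemma a3: "(y::real) > 0 \<Longrightarrow> 2 * sqrt y * (1 / y\<^sup>2) = 2 * y powr (-3/2)"
proof -
  assume y: "y > 0"
  have "y powr (-3/2) = y powr (1/2) / y powr 2" by (simp add: powr_diff[symmetric])
  also have "\<dots> = sqrt y / y^2" using powr_half_sqrt[of y] y by simp
  finally show ?thesis by simp
qed
lemma a4: "(y::real) > 0 \<Longrightarrow> sqrt y * y powr (-1/2) = 1"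
proof -
  assume y: "y > 0"
  have "sqrt y * y powr (-1/2) = y powr (1/2) * y powr (-1/2)" using powr_half_sqrt[of y] y by simp
  also have "\<dots> = 1" using y by (simp add: powr_add[symmetric])
  finally show ?thesis .
qed
lemma a2: "(y::real) > 0 \<Longrightarrow> (y powr (-1/4))^2 = y powr (-1/2)"
proof -
  assume "y > 0"
  have "(y powr (-1/4))^2 = y powr (-1/4) * y powr (-1/4)" by (simp add: power2_eq_square)
  also have "\<dots> = y powr (-1/2)" by (simp add: powr_add[symmetric])
  finally show ?thesis .
qed
lemma a5: "(y::real) > 0 \<Longrightarrow> y powr (1/4) * y powr (-1/4) = 1"
  by (simp add: powr_add[symmetric])

lemma int_inv_sqrt:
  fixes p x :: real assumes "p < x"
  shows "(\<integral>\<^sup>+t. ennreal (indicator {p<..x} t * (t-p) powr (-1/2)) \<partial>lborel) = ennreal (2 * sqrt(x-p))"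
proof -
  have "((\<lambda>t. (t-p) powr (-1/2)) has_integral (2 * sqrt(x-p) - 2 * sqrt(p-p))) {p..x}"
  proof (rule fundamental_theorem_of_calculus_interior)
    show "continuous_on {p..x} (\<lambda>t. 2 * sqrt (t - p))" by (intro continuous_intros)
    fix t assume t: "t \<in> {p<..<x}"
    have "((\<lambda>t. 2 * sqrt (t - p)) has_real_derivative (2 * (inverse (sqrt (t-p)) / 2))) (at t)"
      using t by (auto intro!: derivative_eq_intros)
    moreover have "2 * (inverse (sqrt (t-p)) / 2) = (t-p) powr (-1/2)"
      using t by (simp add: powr_minus powr_half_sqrt)
    ultimately show "((\<lambda>t. 2 * sqrt (t - p)) has_vector_derivative (t-p) powr (-1/2)) (at t)"
      by (simp add: has_real_derivative_iff_has_vector_derivative)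
  qed (use assms in auto)
  then have "(\<integral>\<^sup>+t. ennreal ((t-p) powr (-1/2)) * indicator {p..x} t \<partial>lborel) = ennreal (2 * sqrt(x-p))"
    by (intro nn_integral_has_integral_lebesgue') auto
  moreover have "(\<integral>\<^sup>+t. ennreal ((t-p) powr (-1/2)) * indicator {p..x} t \<partial>lborel) = 
     (\<integral>\<^sup>+t. ennreal (indicator {p<..x} t * (t-p) powr (-1/2)) \<partial>lborel)"
    by (intro nn_integral_cong) (auto split: split_indicator)
  ultimately show ?thesis by simp
qed

lemma int_kernel:
  fixes p t q :: real assumes "p < t" "t \<le> q"
  shows "(\<integral>\<^sup>+x. ennreal (indicator {t..q} x * (2 * (x-p) powr (-3/2))) \<partial>lborel) \<le> ennreal (4 * (t-p) powr (-1/2))"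
proof -
  have "((\<lambda>x. 2 * (x-p) powr (-3/2)) has_integral ((-4 * (q-p) powr (-1/2)) - (-4 * (t-p) powr (-1/2)))) {t..q}"
  proof (rule fundamental_theorem_of_calculus_interior)
    show "continuous_on {t..q} (\<lambda>x. -4 * (x-p) powr (-1/2))"
      using assms by (intro continuous_intros) auto
    fix x assume x: "x \<in> {t<..<q}"
    have "((\<lambda>x. -4 * (x-p) powr (-1/2)) has_real_derivative (-4 * ((-1/2) * (x-p) powr (-1/2 - 1) * 1))) (at x)"
      using x assms by (auto intro!: derivative_eq_intros)
    moreover have "-4 * ((-1/2) * (x-p) powr (-1/2 - 1) * 1) = 2 * (x-p) powr (-3/2)"
      by simp
    ultimately show "((\<lambda>x. -4 * (x-p) powr (-1/2)) has_vector_derivative 2 * (x-p) powr (-3/2)) (at x)"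
      by (simp add: has_real_derivative_iff_has_vector_derivative)
  qed (use assms in auto)
  then have "(\<integral>\<^sup>+x. ennreal (2 * (x-p) powr (-3/2)) * indicator {t..q} x \<partial>lborel) = ennreal ((-4 * (q-p) powr (-1/2)) - (-4 * (t-p) powr (-1/2)))"
    using assms by (intro nn_integral_has_integral_lebesgue') auto
  moreover have "(\<integral>\<^sup>+x. ennreal (2 * (x-p) powr (-3/2)) * indicator {t..q} x \<partial>lborel) = 
     (\<integral>\<^sup>+x. ennreal (indicator {t..q} x * (2 * (x-p) powr (-3/2))) \<partial>lborel)"
    by (intro nn_integral_cong) (auto split: split_indicator)
  moreover have "(-4 * (q-p) powr (-1/2)) - (-4 * (t-p) powr (-1/2)) \<le> 4 * (t-p) powr (-1/2)"
    by simp
  ultimately show ?thesis by (metis ennreal_leI)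
qed


lemma hardy_right:
  fixes v h :: "real \<Rightarrow> real" and p q :: real
  assumes pq: "p < q" and h[measurable]: "h \<in> borel_measurable borel"
    and v: "\<And>x. p < x \<Longrightarrow> x \<le> q \<Longrightarrow> ennreal \<bar>v x\<bar> \<le> (\<integral>\<^sup>+t. ennreal (indicator {p<..x} t * \<bar>h t\<bar>) \<partial>lborel)"
  shows "(\<integral>\<^sup>+x. ennreal (indicator {p<..q} x * ((v x)\<^sup>2 / (x-p)\<^sup>2)) \<partial>lborel) \<le> 4 * (\<integral>\<^sup>+t. ennreal ((h t)\<^sup>2) \<partial>lborel)"
proof -
  define k where "k x t = (if p < t \<and> t \<le> x \<and> x \<le> q then (h t)\<^sup>2 * sqrt (t-p) * (2 * (x-p) powr (-3/2)) else 0)" for x t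
  have kmeas: "(\<lambda>(x,t). ennreal (k x t)) \<in> borel_measurable (lborel \<Otimes>\<^sub>M lborel)"
    unfolding k_def by measurable
  have step1: "ennreal (indicator {p<..q} x * ((v x)\<^sup>2 / (x-p)\<^sup>2)) \<le> (\<integral>\<^sup>+t. ennreal (k x t) \<partial>lborel)" for x
  proof (cases "p < x \<and> x \<le> q")
    case False then show ?thesis by (simp split: split_indicator)
  next
    case True
    define F where "F t = ennreal (indicator {p<..x} t * \<bar>h t\<bar> * (t-p) powr (1/4))" for t
    define G where "G t = ennreal (indicator {p<..x} t * (t-p) powr (-1/4))" for t
    have Fm: "F \<in> borel_measurable lborel" unfolding F_def by measurable
    have Gm: "G \<in> borel_measurable lborel" unfolding G_def by measurable
    have FG: "(\<integral>\<^sup>+t. F t * G t \<partial>lborel) = (\<integral>\<^sup>+t. ennreal (indicator {p<..x} t * \<bar>h t\<bar>) \<partial>lborel)"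
    proof (intro nn_integral_cong)
      fix t
      show "F t * G t = ennreal (indicator {p<..x} t * \<bar>h t\<bar>)"
      proof (cases "p < t \<and> t \<le> x")
        case True
        then have "(t-p) powr (1/4) * (t-p) powr (-1/4) = 1"
          using a5[of "t-p"] by simp
        then have "\<bar>h t\<bar> * (t - p) powr (1 / 4) * (t - p) powr (- 1 / 4) = \<bar>h t\<bar>"
          by (metis mult.assoc mult.right_neutral minus_divide_left)
        with True show ?thesis unfolding F_def G_def
          by (simp add: ennreal_mult[symmetric])
      qed (auto simp: F_def G_def split: split_indicator)
    qed
    have F2: "(\<integral>\<^sup>+t. F t ^ 2 \<partial>lborel) = (\<integral>\<^sup>+t. ennreal (indicator {p<..x} t * (h t)\<^sup>2 * sqrt (t-p)) \<partial>lborel)"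
    proof (intro nn_integral_cong)
      fix t
      show "F t ^ 2 = ennreal (indicator {p<..x} t * (h t)\<^sup>2 * sqrt (t-p))"
      proof (cases "p < t \<and> t \<le> x")
        case True
        then have "((t-p) powr (1/4))^2 = sqrt (t-p)"
          using a1[of "t-p"] by simp
        then have "(\<bar>h t\<bar> * (t-p) powr (1/4))^2 = (h t)\<^sup>2 * sqrt (t-p)"
          by (simp add: power_mult_distrib)
        with True show ?thesis unfolding F_def
          by (simp add: ennreal_power)
      qed (auto simp: F_def split: split_indicator)
    qed
    have G2: "(\<integral>\<^sup>+t. G t ^ 2 \<partial>lborel) = ennreal (2 * sqrt (x-p))"
    proof -
      have "(\<integral>\<^sup>+t. G t ^ 2 \<partial>lborel) = (\<integral>\<^sup>+t. ennreal (indicator {p<..x} t * (t-p) powr (-1/2)) \<partial>lborel)"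
      proof (intro nn_integral_cong)
        fix t
        show "G t ^ 2 = ennreal (indicator {p<..x} t * (t-p) powr (-1/2))"
        proof (cases "p < t \<and> t \<le> x")
          case True
          then have "((t-p) powr (-1/4))^2 = (t-p) powr (-1/2)"
            using a2[of "t-p"] by simp
          with True show ?thesis unfolding G_def
            by (simp add: ennreal_power)
        qed (auto simp: G_def split: split_indicator)
      qed
      also have "\<dots> = ennreal (2 * sqrt (x-p))" using True by (intro int_inv_sqrt) auto
      finally show ?thesis .
    qed
    define A where "A = (\<integral>\<^sup>+t. ennreal (indicator {p<..x} t * (h t)\<^sup>2 * sqrt (t-p)) \<partial>lborel)"
    have vx: "ennreal \<bar>v x\<bar> ^ 2 \<le> A * ennreal (2 * sqrt (x-p))"
    proof -
      have "ennreal \<bar>v x\<bar> ^ 2 \<le> (\<integral>\<^sup>+t. F t * G t \<partial>lborel) ^ 2"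
        unfolding FG using v[of x] True by (intro power_mono_ennreal) auto
      also have "\<dots> \<le> (\<integral>\<^sup>+t. F t ^ 2 \<partial>lborel) * (\<integral>\<^sup>+t. G t ^ 2 \<partial>lborel)"
        by (rule Cauchy_Schwarz_nn_integral[OF Fm Gm])
      finally show ?thesis unfolding F2 G2 A_def .
    qed
    have "ennreal (indicator {p<..q} x * ((v x)\<^sup>2 / (x-p)\<^sup>2)) = ennreal \<bar>v x\<bar> ^ 2 * ennreal (1 / (x-p)\<^sup>2)"
    proof -
      have e: "ennreal \<bar>v x\<bar> ^ 2 = ennreal ((v x)\<^sup>2)" by (simp add: ennreal_power)
      show ?thesis unfolding e using True by (simp add: ennreal_mult[symmetric])
    qed
    also have "\<dots> \<le> A * ennreal (2 * sqrt (x-p)) * ennreal (1 / (x-p)\<^sup>2)"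
      by (intro mult_right_mono vx) auto
    also have "\<dots> = A * ennreal (2 * (x-p) powr (-3/2))"
    proof -
      have "2 * sqrt (x-p) * (1 / (x-p)\<^sup>2) = 2 * (x-p) powr (-3/2)"
        using True a3[of "x-p"] by simp
      then show ?thesis using True by (simp add: mult.assoc ennreal_mult[symmetric])
    qed
    also have "\<dots> = (\<integral>\<^sup>+t. ennreal (indicator {p<..x} t * (h t)\<^sup>2 * sqrt (t-p)) * ennreal (2 * (x-p) powr (-3/2)) \<partial>lborel)"
      unfolding A_def by (rule nn_integral_multc[symmetric]) measurable
    also have "\<dots> = (\<integral>\<^sup>+t. ennreal (k x t) \<partial>lborel)"
      using True by (intro nn_integral_cong) (auto simp: k_def ennreal_mult[symmetric] split: split_indicator)
    finally show ?thesis .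
  qed
  have step2: "(\<integral>\<^sup>+x. ennreal (k x t) \<partial>lborel) \<le> ennreal 4 * ennreal ((h t)\<^sup>2)" for t
  proof (cases "p < t \<and> t \<le> q")
    case False
    then have "\<And>x. k x t = 0" by (auto simp: k_def)
    then show ?thesis by simp
  next
    case True
    have "(\<integral>\<^sup>+x. ennreal (k x t) \<partial>lborel) = (\<integral>\<^sup>+x. ennreal ((h t)\<^sup>2 * sqrt (t-p)) * ennreal (indicator {t..q} x * (2 * (x-p) powr (-3/2))) \<partial>lborel)"
      using True by (intro nn_integral_cong) (auto simp: k_def ennreal_mult[symmetric] split: split_indicator)
    also have "\<dots> = ennreal ((h t)\<^sup>2 * sqrt (t-p)) * (\<integral>\<^sup>+x. ennreal (indicator {t..q} x * (2 * (x-p) powr (-3/2))) \<partial>lborel)"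
      by (rule nn_integral_cmult) measurable
    also have "\<dots> \<le> ennreal ((h t)\<^sup>2 * sqrt (t-p)) * ennreal (4 * (t-p) powr (-1/2))"
      using True by (intro mult_left_mono int_kernel) auto
    also have "\<dots> = ennreal 4 * ennreal ((h t)\<^sup>2)"
    proof -
      have s1: "sqrt (t-p) * (t-p) powr (-1/2) = 1" by (rule a4) (use True in simp)
      have s2: "(h t)\<^sup>2 * sqrt (t-p) * (4 * (t-p) powr (-1/2)) = 4 * (h t)\<^sup>2"
        using s1 by (metis (no_types, opaque_lifting) mult.assoc mult.commute mult.right_neutral)
      have "ennreal ((h t)\<^sup>2 * sqrt (t-p)) * ennreal (4 * (t-p) powr (-1/2)) = ennreal ((h t)\<^sup>2 * sqrt (t-p) * (4 * (t-p) powr (-1/2)))"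
        by (rule ennreal_mult[symmetric]) (use True in auto)
      then have "ennreal ((h t)\<^sup>2 * sqrt (t-p)) * ennreal (4 * (t-p) powr (-1/2)) = ennreal (4 * (h t)\<^sup>2)"
        unfolding s2 .
      then show ?thesis by (simp add: ennreal_mult)
    qed
    finally show ?thesis .
  qed
  have "(\<integral>\<^sup>+x. ennreal (indicator {p<..q} x * ((v x)\<^sup>2 / (x-p)\<^sup>2)) \<partial>lborel) \<le> (\<integral>\<^sup>+x. (\<integral>\<^sup>+t. ennreal (k x t) \<partial>lborel) \<partial>lborel)"
    by (intro nn_integral_mono step1)
  also have "\<dots> = (\<integral>\<^sup>+t. (\<integral>\<^sup>+x. ennreal (k x t) \<partial>lborel) \<partial>lborel)"
    using lborel_pair.Fubini'[OF kmeas] by simp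
  also have "\<dots> \<le> (\<integral>\<^sup>+t. ennreal 4 * ennreal ((h t)\<^sup>2) \<partial>lborel)"
    by (intro nn_integral_mono step2)
  also have "\<dots> = 4 * (\<integral>\<^sup>+t. ennreal ((h t)\<^sup>2) \<partial>lborel)"
    by (subst nn_integral_cmult) auto
  finally show ?thesis .
qed



lemma gronwall_right:
  fixes c :: "real \<Rightarrow> real" and p q K x :: real
  assumes pq: "p < q" and K: "0 < K" and cc: "continuous_on {p<..q} c"
    and hyp: "\<And>x y. p < x \<Longrightarrow> x \<le> y \<Longrightarrow> y \<le> q \<Longrightarrow> c y - c x \<le> K * integral {x..y} (\<lambda>t. c t / (t-p))"
    and x: "p < x" "x \<le> q"
  shows "c q \<le> c x * ((q-p)/(x-p)) powr K"
proof (cases "x = q")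
  case True then show ?thesis using pq by simp
next
  case False
  with x have xq: "x < q" by simp
  define F where "F y = integral {x..y} (\<lambda>t. c t / (t-p))" for y
  define H where "H y = (c x + K * F y) * (y-p) powr (-K)" for y
  have cf: "continuous_on {x..q} (\<lambda>t. c t / (t-p))"
    using x by (intro continuous_intros continuous_on_subset[OF cc]) auto
  have Fc: "continuous_on {x..q} F"
    unfolding F_def by (rule indefinite_integral_continuous_1[OF integrable_continuous_real[OF cf]])
  have Hc: "continuous_on {x..q} H"
    unfolding H_def using x by (intro continuous_intros Fc) auto
  have HD: "(H has_real_derivative (K * (c z / (z-p)) * (z-p) powr (-K) + (c x + K * F z) * (-K * (z-p) powr (-K-1)))) (at z)"
    if z: "x < z" "z < q" for z
  proof -
    have "(F has_real_derivative (c z / (z-p))) (at z within {x..q})"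
      unfolding F_def using z by (intro integral_has_real_derivative cf) auto
    then have FD: "(F has_real_derivative (c z / (z-p))) (at z)"
      using at_within_Icc_at[of x z q] z by simp
    have PD: "((\<lambda>y. (y-p) powr (-K)) has_real_derivative (-K * (z-p) powr (-K-1))) (at z)"
      using z x by (auto intro!: derivative_eq_intros simp: algebra_simps)
    have zp: "p < z" using z x by simp
    show ?thesis unfolding H_def using zp
      by (auto intro!: derivative_eq_intros FD PD)
  qed
  have Hle: "H q \<le> H x"
  proof -
    obtain l z where z: "x < z" "z < q" and Dz: "DERIV H z :> l" and eq: "H q - H x = (q - x) * l"
      using MVT[OF xq Hc] HD by (metis real_differentiable_def)
    have l: "l = K * (c z / (z-p)) * (z-p) powr (-K) + (c x + K * F z) * (-K * (z-p) powr (-K-1))"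
      using DERIV_unique[OF Dz HD[OF z]] .
    have zp: "z - p > 0" using z x by simp
    have e0: "(z-p) powr (-K) / (z-p) = (z-p) powr (-K-1)"
      using zp by (simp add: powr_diff)
    have e1: "K * (c z / (z-p)) * (z-p) powr (-K) = K * (c z * (z-p) powr (-K-1))"
      by (simp add: e0[symmetric])
    have "l = K * (z-p) powr (-K-1) * (c z - c x - K * F z)"
      unfolding l e1 by (simp add: algebra_simps)
    moreover have "c z - c x - K * F z \<le> 0"
      using hyp[of x z] x z unfolding F_def by simp
    moreover have "K * (z-p) powr (-K-1) \<ge> 0" using K by simp
    ultimately have "l \<le> 0" by (simp add: mult_nonneg_nonpos)
    then have "(q - x) * l \<le> 0" using xq by (simp add: mult_nonneg_nonpos)
    then show ?thesis using eq by simp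
  qed
  have Fx: "F x = 0" unfolding F_def by simp
  have "c q \<le> c x + K * F q" using hyp[of x q] x xq unfolding F_def by simp
  also have "\<dots> = H q * (q-p) powr K"
    unfolding H_def using pq by (simp add: powr_minus field_simps)
  also have "\<dots> \<le> H x * (q-p) powr K"
    by (intro mult_right_mono Hle) simp
  also have "\<dots> = c x * ((q-p)/(x-p)) powr K"
    unfolding H_def Fx using x pq by (simp add: powr_divide powr_minus field_simps)
  finally show ?thesis .
qed


lemma integral_le_AE:
  fixes f g :: "real \<Rightarrow> real"
  assumes f: "f integrable_on S" and g: "g integrable_on S"
    and ae: "AE t in lebesgue. t \<in> S \<longrightarrow> f t \<le> g t"
  shows "integral S f \<le> integral S g"
proof -
  from ae obtain N where N: "{t \<in> space lebesgue. \<not> (t \<in> S \<longrightarrow> f t \<le> g t)} \<subseteq> N" "emeasure lebesgue N = 0" "N \<in> sets lebesgue"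
    by (rule AE_E)
  have negN: "negligible N" using N(2,3) by (simp add: negligible_iff_null_sets null_sets_def)
  define f' where "f' t = (if t \<in> N then g t else f t)" for t
  have "integral S f = integral S f'"
    by (rule integral_spike[OF negN]) (auto simp: f'_def)
  also have "\<dots> \<le> integral S g"
  proof (rule integral_le)
    show "f' integrable_on S" by (rule integrable_spike[OF f negN]) (auto simp: f'_def)
    show "g integrable_on S" by (rule g)
    show "\<And>x. x \<in> S \<Longrightarrow> f' x \<le> g x" using N(1) by (auto simp: f'_def)
  qed
  finally show ?thesis .
qed

lemma wd_int: "weak_deriv_01 a a' \<Longrightarrow> a' integrable_on {0..1}"
  by (simp add: weak_deriv_01_def absolutely_integrable_on_def)

lemma wd_diff:
  assumes wd: "weak_deriv_01 a a'" and xy: "0 \<le> x" "x \<le> y" "y \<le> 1"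
  shows "a y - a x = integral {x..y} a'" "a' integrable_on {x..y}"
proof -
  have i1: "a' integrable_on {0..1}" using wd_int[OF wd] .
  then have iy: "a' integrable_on {0..y}" by (rule integrable_on_subinterval) (use xy in auto)
  show "a' integrable_on {x..y}" using i1 by (rule integrable_on_subinterval) (use xy in auto)
  have A: "\<forall>x\<in>{0..1}. a x = a 0 + integral {0..x} a'"
    using wd unfolding weak_deriv_01_def by blast
  have "integral {0..x} a' + integral {x..y} a' = integral {0..y} a'"
    by (rule Henstock_Kurzweil_Integration.integral_combine[OF xy(1,2) iy])
  moreover have "a y = a 0 + integral {0..y} a'" by (rule A[rule_format]) (use xy in auto)
  moreover have "a x = a 0 + integral {0..x} a'" by (rule A[rule_format]) (use xy in auto)
  ultimately show "a y - a x = integral {x..y} a'" by linarith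
qed

lemma wd_cont:
  assumes wd: "weak_deriv_01 a a'"
  shows "continuous_on {0..1} a"
proof -
  have "continuous_on {0..1} (\<lambda>x. a 0 + integral {0..x} a')"
    by (intro continuous_intros indefinite_integral_continuous_1 wd_int[OF wd])
  moreover have A: "\<forall>x\<in>{0..1}. a x = a 0 + integral {0..x} a'"
    using wd unfolding weak_deriv_01_def by blast
  ultimately show ?thesis
    using continuous_on_eq[of "{0..1}" "\<lambda>x. a 0 + integral {0..x} a'" a] by metis
qed


lemma deg_lower:
  fixes a a' :: "real \<Rightarrow> real" and x0 K :: real
  assumes x0: "0 < x0" "x0 < 1" and ax0: "a x0 = 0" and pos: "\<forall>x\<in>{0..1}-{x0}. a x > 0"
    and wd: "weak_deriv_01 a a'" and K: "0 < K"
    and ae: "AE x in lebesgue. x \<in> {0..1} \<longrightarrow> (x - x0) * a' x \<le> K * a x"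
  shows "\<exists>c>0. \<forall>x\<in>{0..1}. c * \<bar>x - x0\<bar> powr K \<le> a x"
proof -
  have ac: "continuous_on {0..1} a" by (rule wd_cont[OF wd])
  have R: "a 1 * (x - x0) powr K \<le> a x" if x: "x0 < x" "x \<le> 1" for x
  proof -
    have g: "a 1 \<le> a x * ((1-x0)/(x-x0)) powr K"
    proof (rule gronwall_right[of x0 1 K a x])
      show "continuous_on {x0<..1} a" by (rule continuous_on_subset[OF ac]) (use x0 in auto)
      fix s y assume sy: "x0 < s" "s \<le> y" "y \<le> 1"
      have cI: "continuous_on {s..y} (\<lambda>t. K * (a t / (t - x0)))"
        using sy x0 by (intro continuous_intros continuous_on_subset[OF ac]) auto
      have "a y - a s = integral {s..y} a'" using wd_diff[OF wd, of s y] sy x0 by auto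
      also have "\<dots> \<le> integral {s..y} (\<lambda>t. K * (a t / (t - x0)))"
      proof (rule integral_le_AE)
        show "a' integrable_on {s..y}" using wd_diff[OF wd, of s y] sy x0 by auto
        show "(\<lambda>t. K * (a t / (t - x0))) integrable_on {s..y}" by (rule integrable_continuous_real[OF cI])
        show "AE t in lebesgue. t \<in> {s..y} \<longrightarrow> a' t \<le> K * (a t / (t - x0))"
          using ae
        proof (rule eventually_mono)
          fix t assume h: "t \<in> {0..1} \<longrightarrow> (t - x0) * a' t \<le> K * a t"
          show "t \<in> {s..y} \<longrightarrow> a' t \<le> K * (a t / (t - x0))"
          proof
            assume t: "t \<in> {s..y}"
            then have "(t - x0) * a' t \<le> K * a t" "t - x0 > 0" using h sy x0 by auto
            then show "a' t \<le> K * (a t / (t - x0))" by (simp add: pos_le_divide_eq mult.commute)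
          qed
        qed
      qed
      also have "\<dots> = K * integral {s..y} (\<lambda>t. a t / (t - x0))"
        using integral_cmul[of "{s..y}" K "\<lambda>t. a t / (t - x0)"] by (simp only: real_scaleR_def)
      finally show "a y - a s \<le> K * integral {s..y} (\<lambda>t. a t / (t - x0))" .
    qed (use x0 x K in auto)
    have xp: "(x - x0) powr K > 0" using x by simp
    have "a 1 * (x - x0) powr K \<le> a x * ((1-x0)/(x-x0)) powr K * (x - x0) powr K"
      using g xp by (intro mult_right_mono) auto
    also have "\<dots> = a x * (1 - x0) powr K"
      using x xp by (simp add: powr_divide)
    also have "\<dots> \<le> a x * 1"
    proof (intro mult_left_mono)
      show "(1 - x0) powr K \<le> 1" using x0 K by (simp add: powr_le1)
      have "x \<in> {0..1} - {x0}" using x x0 by auto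
      then show "0 \<le> a x" using pos by (auto intro: less_imp_le)
    qed
    finally show ?thesis by simp
  qed
  have L: "a 0 * (x0 - x) powr K \<le> a x" if x: "0 \<le> x" "x < x0" for x
  proof -
    have g: "(\<lambda>s. a (-s)) 0 \<le> (\<lambda>s. a (-s)) (-x) * ((0 - -x0)/(-x - -x0)) powr K"
    proof (rule gronwall_right[of "-x0" 0 K "\<lambda>s. a (-s)" "-x"])
      show "continuous_on {-x0<..0} (\<lambda>s. a (-s))"
        by (rule continuous_on_compose2[OF ac]) (use x0 in \<open>auto intro!: continuous_intros\<close>)
      fix s1 s2 assume s: "-x0 < s1" "s1 \<le> s2" "s2 \<le> 0"
      define y1 where "y1 = -s2"
      define y2 where "y2 = -s1"
      have y: "0 \<le> y1" "y1 \<le> y2" "y2 < x0" using s unfolding y1_def y2_def by auto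
      have cI: "continuous_on {y1..y2} (\<lambda>t. K * (a t / (x0 - t)))"
        using y x0 by (intro continuous_intros continuous_on_subset[OF ac]) auto
      have "a y1 - a y2 = integral {y1..y2} (\<lambda>t. - a' t)"
        using wd_diff[OF wd, of y1 y2] y x0 by (auto simp: integral_neg)
      also have "\<dots> \<le> integral {y1..y2} (\<lambda>t. K * (a t / (x0 - t)))"
      proof (rule integral_le_AE)
        show "(\<lambda>t. - a' t) integrable_on {y1..y2}" using wd_diff[OF wd, of y1 y2] y x0 by (auto intro: integrable_neg)
        show "(\<lambda>t. K * (a t / (x0 - t))) integrable_on {y1..y2}" by (rule integrable_continuous_real[OF cI])
        show "AE t in lebesgue. t \<in> {y1..y2} \<longrightarrow> - a' t \<le> K * (a t / (x0 - t))"
          using ae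
        proof (rule eventually_mono)
          fix t assume h: "t \<in> {0..1} \<longrightarrow> (t - x0) * a' t \<le> K * a t"
          show "t \<in> {y1..y2} \<longrightarrow> - a' t \<le> K * (a t / (x0 - t))"
          proof
            assume t: "t \<in> {y1..y2}"
            then have "(t - x0) * a' t \<le> K * a t" "x0 - t > 0" using h y x0 by auto
            then show "- a' t \<le> K * (a t / (x0 - t))" by (simp add: pos_le_divide_eq algebra_simps)
          qed
        qed
      qed
      also have "\<dots> = K * integral {y1..y2} (\<lambda>t. a t / (x0 - t))"
        using integral_cmul[of "{y1..y2}" K "\<lambda>t. a t / (x0 - t)"] by (simp only: real_scaleR_def)
      also have "integral {y1..y2} (\<lambda>t. a t / (x0 - t)) = integral {-y2..-y1} (\<lambda>t. a (-t) / (x0 - - t))"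
        using Henstock_Kurzweil_Integration.integral_reflect_real[of y2 y1 "\<lambda>t. a t / (x0 - t)"] by simp
      also have "\<dots> = integral {s1..s2} (\<lambda>t. a (- t) / (t - - x0))"
        unfolding y1_def y2_def by (simp add: algebra_simps)
      finally show "(\<lambda>s. a (-s)) s2 - (\<lambda>s. a (-s)) s1 \<le> K * integral {s1..s2} (\<lambda>t. (\<lambda>s. a (-s)) t / (t - - x0))"
        unfolding y1_def y2_def by simp
    qed (use x0 x K in auto)
    then have g: "a 0 \<le> a x * (x0 / (x0 - x)) powr K" by simp
    have xp: "(x0 - x) powr K > 0" using x by simp
    have "a 0 * (x0 - x) powr K \<le> a x * (x0 / (x0 - x)) powr K * (x0 - x) powr K"
      using g xp by (intro mult_right_mono) auto
    also have "\<dots> = a x * x0 powr K"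
      using x xp x0 by (simp add: powr_divide)
    also have "\<dots> \<le> a x * 1"
    proof (intro mult_left_mono)
      show "x0 powr K \<le> 1" using x0 K by (simp add: powr_le1)
      have "x \<in> {0..1} - {x0}" using x x0 by auto
      then show "0 \<le> a x" using pos by (auto intro: less_imp_le)
    qed
    finally show ?thesis by simp
  qed
  define c where "c = min (a 0) (a 1)"
  have c: "c > 0" using pos x0 unfolding c_def by auto
  show ?thesis
  proof (intro exI[of _ c] conjI ballI c)
    fix x :: real assume x: "x \<in> {0..1}"
    consider "x0 < x" | "x < x0" | "x = x0" by linarith
    then show "c * \<bar>x - x0\<bar> powr K \<le> a x"
    proof cases
      case 1
      have "\<bar>x - x0\<bar> = x - x0" using 1 by simp
      moreover have "c \<le> a 1" unfolding c_def by simp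
      ultimately have "c * \<bar>x - x0\<bar> powr K \<le> a 1 * (x - x0) powr K"
        by (simp add: mult_right_mono)
      also have "\<dots> \<le> a x" using R[of x] 1 x by auto
      finally show ?thesis .
    next
      case 2
      have "\<bar>x - x0\<bar> = x0 - x" using 2 by simp
      moreover have "c \<le> a 0" unfolding c_def by simp
      ultimately have "c * \<bar>x - x0\<bar> powr K \<le> a 0 * (x0 - x) powr K"
        by (simp add: mult_right_mono)
      also have "\<dots> \<le> a x" using L[of x] 2 x by auto
      finally show ?thesis .
    qed (simp add: ax0)
  qed
qed



lemma combine_bounds:
  fixes a b :: "real \<Rightarrow> real" and x0 K1 K2 c1 c2 D1 D2 :: real
  assumes x0: "0 < x0" "x0 < 1" and KK: "1 \<le> K1 + K2" "K1 + K2 \<le> 2" "0 < K1" "0 < K2"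
    and c: "c1 > 0" "c2 > 0"
    and la: "\<forall>x\<in>{0..1}. c1 * \<bar>x - x0\<bar> powr K1 \<le> a x"
    and lb: "\<forall>x\<in>{0..1}. c2 * \<bar>x - x0\<bar> powr K2 \<le> b x"
    and ua: "\<forall>x\<in>{0..1}. a x \<le> D1 * \<bar>x - x0\<bar> powr K1"
    and ub: "\<forall>x\<in>{0..1}. b x \<le> D2 * \<bar>x - x0\<bar> powr K2"
  shows "\<exists>e>0. \<exists>d>0. \<forall>x\<in>{0..1}. e * (x - x0)\<^sup>2 \<le> a x * b x \<and> a x * b x \<le> d * \<bar>x - x0\<bar>"
proof -
  define D1' where "D1' = max D1 0"
  define D2' where "D2' = max D2 0"
  have cc: "c1 * c2 > 0" using c by simp
  have dd: "D1' * D2' + 1 > 0" unfolding D1'_def D2'_def by (simp add: add_nonneg_pos)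
  have "\<forall>x\<in>{0..1}. c1 * c2 * (x - x0)\<^sup>2 \<le> a x * b x \<and> a x * b x \<le> (D1' * D2' + 1) * \<bar>x - x0\<bar>"
  proof (intro ballI conjI)
    fix x :: real assume x: "x \<in> {0..1}"
    define t where "t = \<bar>x - x0\<bar>"
    have t: "0 \<le> t" "t \<le> 1" using x x0 unfolding t_def by auto
    have p1: "0 \<le> t powr K1" "0 \<le> t powr K2" by auto
    have a0: "c1 * t powr K1 \<le> a x" "b x \<ge> c2 * t powr K2" using la lb x unfolding t_def by auto
    have "0 \<le> c1 * t powr K1" "0 \<le> c2 * t powr K2" using c p1 by auto
    then have aa: "0 \<le> a x" "0 \<le> b x" using a0 by linarith+
    have sum: "t powr K1 * t powr K2 = t powr (K1 + K2)" by (simp add: powr_add)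
    have "e2": "t powr 2 = (x - x0)\<^sup>2"
    proof (cases "t = 0")
      case True then show ?thesis unfolding t_def by simp
    next
      case False then have "t > 0" using t by simp
      then have "t powr 2 = t ^ 2" using powr_realpow[of t 2] by simp
      then show ?thesis unfolding t_def by simp
    qed
    have "c1 * c2 * (x - x0)\<^sup>2 = c1 * c2 * t powr 2" by (simp add: e2)
    also have "\<dots> \<le> c1 * c2 * t powr (K1 + K2)"
      using c t KK by (intro mult_left_mono powr_mono') auto
    also have "\<dots> = (c1 * t powr K1) * (c2 * t powr K2)" by (simp add: sum[symmetric] algebra_simps)
    also have "\<dots> \<le> a x * b x"
      using a0 c p1 aa by (intro mult_mono) auto
    finally show "c1 * c2 * (x - x0)\<^sup>2 \<le> a x * b x" .
    have "D1 * t powr K1 \<le> D1' * t powr K1" unfolding D1'_def using p1 by (intro mult_right_mono) auto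
    then have "a x \<le> D1' * t powr K1" using ua x unfolding t_def by force
    have "D2 * t powr K2 \<le> D2' * t powr K2" unfolding D2'_def using p1 by (intro mult_right_mono) auto
    then have "b x \<le> D2' * t powr K2" using ub x unfolding t_def by force
    with \<open>a x \<le> D1' * t powr K1\<close> have "a x * b x \<le> (D1' * t powr K1) * (D2' * t powr K2)"
      using aa by (intro mult_mono) (auto simp: D1'_def D2'_def)
    also have "\<dots> = D1' * D2' * t powr (K1 + K2)" by (simp add: sum[symmetric] algebra_simps)
    also have "\<dots> \<le> D1' * D2' * t powr 1"
      using t KK by (intro mult_left_mono powr_mono') (auto simp: D1'_def D2'_def)
    also have "\<dots> \<le> (D1' * D2' + 1) * \<bar>x - x0\<bar>"
    proof -
      have "t powr 1 = t" using t by simp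
      moreover have "D1' * D2' \<le> D1' * D2' + 1" by simp
      ultimately show ?thesis using t unfolding t_def by (simp add: mult_right_mono)
    qed
    finally show "a x * b x \<le> (D1' * D2' + 1) * \<bar>x - x0\<bar>" .
  qed
  then show ?thesis using cc dd by blast
qed



lemma int_inv_lin:
  fixes x0 s r :: real assumes "0 < s" "s \<le> r"
  shows "((\<lambda>x. 1 / (x - x0)) has_integral (ln r - ln s)) {x0+s..x0+r}"
proof -
  have "((\<lambda>x. 1 / (x - x0)) has_integral (ln ((x0+r) - x0) - ln ((x0+s) - x0))) {x0+s..x0+r}"
  proof (rule fundamental_theorem_of_calculus_interior)
    show "continuous_on {x0+s..x0+r} (\<lambda>x. ln (x - x0))"
      using assms by (intro continuous_intros) auto
    fix x assume x: "x \<in> {x0+s<..<x0+r}"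
    have "((\<lambda>x. ln (x - x0)) has_real_derivative (1 / (x - x0))) (at x)"
      using x assms by (auto intro!: derivative_eq_intros)
    then show "((\<lambda>x. ln (x - x0)) has_vector_derivative 1 / (x - x0)) (at x)"
      by (simp add: has_real_derivative_iff_has_vector_derivative)
  qed (use assms in auto)
  then show ?thesis by simp
qed

lemma u_zero:
  fixes a b u :: "real \<Rightarrow> real" and x0 d :: real
  assumes x0: "0 < x0" "x0 < 1" and d: "d > 0"
    and up: "\<forall>x\<in>{0..1}. a x * b x \<le> d * \<bar>x - x0\<bar>"
    and abpos: "\<forall>x\<in>{0..1} - {x0}. a x * b x > 0"
    and abnn: "\<forall>x\<in>{0..1}. a x * b x \<ge> 0"
    and uc: "continuous_on {0..1} u"
    and fi: "(\<lambda>x. (u x)\<^sup>2 / (a x * b x)) integrable_on {0..1}"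
  shows "u x0 = 0"
proof (rule ccontr)
  assume nz: "u x0 \<noteq> 0"
  define f where "f x = (u x)\<^sup>2 / (a x * b x)" for x
  define I where "I = integral {0..1} f"
  define \<delta> where "\<delta> = (u x0)\<^sup>2 / 2"
  have \<delta>: "\<delta> > 0" using nz unfolding \<delta>_def by simp
  have u2c: "continuous_on {0..1} (\<lambda>x. (u x)\<^sup>2)" by (intro continuous_intros uc)
  then obtain r where r: "r > 0" and rr: "\<And>x. x \<in> {0..1} \<Longrightarrow> dist x x0 < r \<Longrightarrow> dist ((u x)\<^sup>2) ((u x0)\<^sup>2) < \<delta>"
    using x0 \<delta> unfolding continuous_on_iff by (metis atLeastAtMost_iff less_imp_le)
  define r' where "r' = min (r/2) (1 - x0)"
  have r': "r' > 0" "x0 + r' \<le> 1" "r' < r" using r x0 unfolding r'_def by auto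
  have fnn: "\<forall>x\<in>{0..1}. 0 \<le> f x"
  proof
    fix x :: real assume x: "x \<in> {0..1}"
    show "0 \<le> f x"
    proof (cases "x = x0")
      case False then have "a x * b x > 0" using abpos x by auto
      then show ?thesis unfolding f_def by simp
    qed (use abnn x in \<open>simp add: f_def\<close>)
  qed
  have lb: "\<delta> / d * (1 / (x - x0)) \<le> f x" if x: "x0 < x" "x \<le> x0 + r'" for x
  proof -
    have x01: "x \<in> {0..1}" using x x0 r' by auto
    have "dist ((u x)\<^sup>2) ((u x0)\<^sup>2) < \<delta>" using rr[OF x01] x r' by (simp add: dist_real_def)
    then have "(u x0)\<^sup>2 - (u x)\<^sup>2 < \<delta>" unfolding dist_real_def by linarith
    then have u2: "\<delta> \<le> (u x)\<^sup>2" unfolding \<delta>_def by linarith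
    have ab1: "0 < a x * b x" using abpos x01 x by auto
    have "a x * b x \<le> d * \<bar>x - x0\<bar>" using up x01 by auto
    then have ab: "0 < a x * b x" "a x * b x \<le> d * (x - x0)" using ab1 x by auto
    have "\<delta> / d * (1 / (x - x0)) = \<delta> / (d * (x - x0))" by simp
    also have "\<dots> \<le> (u x)\<^sup>2 / (d * (x - x0))" using u2 d x by (intro divide_right_mono) auto
    also have "\<dots> \<le> (u x)\<^sup>2 / (a x * b x)" using ab by (intro divide_left_mono) auto
    finally show ?thesis unfolding f_def .
  qed
  have bound: "\<delta> / d * (ln r' - ln s) \<le> I" if s: "0 < s" "s \<le> r'" for s
  proof -
    have sub: "{x0+s..x0+r'} \<subseteq> {0..1}" using s r' x0 by auto
    have fi': "f integrable_on {x0+s..x0+r'}"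
      using integrable_on_subinterval[OF fi[folded f_def] sub] .
    have hi: "((\<lambda>x. \<delta> / d * (1 / (x - x0))) has_integral (\<delta> / d * (ln r' - ln s))) {x0+s..x0+r'}"
      by (rule has_integral_mult_right[OF int_inv_lin[OF s]])
    have "\<delta> / d * (ln r' - ln s) = integral {x0+s..x0+r'} (\<lambda>x. \<delta> / d * (1 / (x - x0)))"
      using integral_unique[OF hi] by simp
    also have "\<dots> \<le> integral {x0+s..x0+r'} f"
    proof (rule integral_le)
      show "(\<lambda>x. \<delta> / d * (1 / (x - x0))) integrable_on {x0+s..x0+r'}"
        using hi by blast
      show "f integrable_on {x0+s..x0+r'}" by (rule fi')
      fix x assume "x \<in> {x0+s..x0+r'}"
      then show "\<delta> / d * (1 / (x - x0)) \<le> f x" using s by (intro lb) auto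
    qed
    also have "\<dots> \<le> I"
      unfolding I_def using fnn sub by (intro integral_subset_le fi' fi[folded f_def]) auto
    finally show ?thesis .
  qed
  define s where "s = r' * exp (- (\<bar>I\<bar> * d / \<delta> + 1))"
  have "0 \<le> \<bar>I\<bar> * d / \<delta>" using d \<delta> by simp
  then have s: "0 < s" "s \<le> r'" using r' unfolding s_def by (auto simp: mult_le_cancel_left1)
  have "ln r' - ln s = \<bar>I\<bar> * d / \<delta> + 1" using r' unfolding s_def by (simp add: ln_mult)
  with bound[OF s] have "\<delta> / d * (\<bar>I\<bar> * d / \<delta> + 1) \<le> I" by simp
  moreover have "\<delta> / d * (\<bar>I\<bar> * d / \<delta> + 1) = \<bar>I\<bar> + \<delta> / d" using \<delta> d by (simp add: field_simps)
  moreover have "\<delta> / d > 0" using \<delta> d by simp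
  moreover have "I \<le> \<bar>I\<bar>" by simp
  ultimately show False by linarith
qed



lemma wd_upper:
  fixes a a' :: "real \<Rightarrow> real"
  assumes x0: "0 \<le> x0" "x0 \<le> 1" and ax0: "a x0 = 0" and wd: "weak_deriv_01 a a'"
    and M: "AE x in lebesgue. x \<in> {0..1} \<longrightarrow> \<bar>a' x\<bar> \<le> M"
  shows "\<forall>x\<in>{0..1}. a x \<le> M * \<bar>x - x0\<bar> powr 1"
proof
  fix x :: real assume x: "x \<in> {0..1}"
  consider "x0 \<le> x" | "x < x0" by linarith
  then show "a x \<le> M * \<bar>x - x0\<bar> powr 1"
  proof cases
    case 1
    have "a x = integral {x0..x} a'" using wd_diff[OF wd, of x0 x] 1 x x0 ax0 by auto
    also have "\<dots> \<le> integral {x0..x} (\<lambda>_. M)"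
    proof (rule integral_le_AE)
      show "a' integrable_on {x0..x}" using wd_diff[OF wd, of x0 x] 1 x x0 by auto
      show "(\<lambda>_. M) integrable_on {x0..x}" by (rule Henstock_Kurzweil_Integration.integrable_const_ivl)
      show "AE t in lebesgue. t \<in> {x0..x} \<longrightarrow> a' t \<le> M"
        using M by (rule eventually_mono) (use x x0 in auto)
    qed
    also have "\<dots> = M * \<bar>x - x0\<bar> powr 1" using 1 by (cases "x = x0") auto
    finally show ?thesis .
  next
    case 2
    have "a x = integral {x..x0} (\<lambda>t. - a' t)" using wd_diff[OF wd, of x x0] 2 x x0 ax0 by auto
    also have "\<dots> \<le> integral {x..x0} (\<lambda>_. M)"
    proof (rule integral_le_AE)
      show "(\<lambda>t. - a' t) integrable_on {x..x0}" using wd_diff[OF wd, of x x0] 2 x x0 by (auto intro: integrable_neg)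
      show "(\<lambda>_. M) integrable_on {x..x0}" by (rule Henstock_Kurzweil_Integration.integrable_const_ivl)
      show "AE t in lebesgue. t \<in> {x..x0} \<longrightarrow> - a' t \<le> M"
        using M by (rule eventually_mono) (use x x0 in auto)
    qed
    also have "\<dots> = M * \<bar>x - x0\<bar> powr 1" using 2 by (simp add: algebra_simps)
    finally show ?thesis .
  qed
qed

lemma low_weak:
  assumes "0 < x0" "x0 < 1" "f x0 = 0" "\<forall>x\<in>{0..1}-{x0}. f x > 0" "weakly_deg f x0 K"
  shows "\<exists>c>0. \<forall>x\<in>{0..1}. c * \<bar>x - x0\<bar> powr K \<le> f x"
proof -
  obtain f' where "W11_01 f f'" "AE x in lebesgue. x \<in> {0..1} \<longrightarrow> (x - x0) * f' x \<le> K * f x" "0 < K"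
    using assms(5) unfolding weakly_deg_def by blast
  then show ?thesis using deg_lower[OF assms(1-4)] unfolding W11_01_def by blast
qed

lemma low_strong:
  assumes "0 < x0" "x0 < 1" "f x0 = 0" "\<forall>x\<in>{0..1}-{x0}. f x > 0" "strongly_deg f x0 K"
  shows "\<exists>c>0. \<forall>x\<in>{0..1}. c * \<bar>x - x0\<bar> powr K \<le> f x"
proof -
  obtain f' where "W1inf_01 f f'" "AE x in lebesgue. x \<in> {0..1} \<longrightarrow> (x - x0) * f' x \<le> K * f x" "0 < K"
    using assms(5) unfolding strongly_deg_def by auto
  then show ?thesis using deg_lower[OF assms(1-4)] unfolding W1inf_01_def by blast
qed

lemma up_strong:
  assumes "0 < x0" "x0 < 1" "f x0 = 0" "strongly_deg f x0 K"
  shows "\<exists>D. \<forall>x\<in>{0..1}. f x \<le> D * \<bar>x - x0\<bar> powr 1"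
proof -
  obtain f' M where "weak_deriv_01 f f'" "AE x in lebesgue. x \<in> {0..1} \<longrightarrow> \<bar>f' x\<bar> \<le> M"
    using assms(4) unfolding strongly_deg_def W1inf_01_def by blast
  then show ?thesis using wd_upper[of x0 f f' M] assms(1-3) by auto
qed

lemma up_pb:
  assumes "power_bounds a b x0 K1 K2"
  shows "\<exists>D1. \<forall>x\<in>{0..1}. a x \<le> D1 * \<bar>x - x0\<bar> powr K1"
    and "\<exists>D2. \<forall>x\<in>{0..1}. b x \<le> D2 * \<bar>x - x0\<bar> powr K2"
proof -
  obtain c1 c2 where c: "c1 > 0" "c2 > 0"
    and h: "\<forall>x\<in>{0..1}. \<bar>x - x0\<bar> powr K1 \<ge> c1 * a x \<and> \<bar>x - x0\<bar> powr K2 \<ge> c2 * b x"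
    using assms unfolding power_bounds_def by blast
  show "\<exists>D1. \<forall>x\<in>{0..1}. a x \<le> D1 * \<bar>x - x0\<bar> powr K1"
  proof (intro exI[of _ "1/c1"] ballI)
    fix x :: real assume "x \<in> {0..1}"
    then have "c1 * a x \<le> \<bar>x - x0\<bar> powr K1" using h by auto
    then show "a x \<le> 1 / c1 * \<bar>x - x0\<bar> powr K1" using c by (simp add: field_simps)
  qed
  show "\<exists>D2. \<forall>x\<in>{0..1}. b x \<le> D2 * \<bar>x - x0\<bar> powr K2"
  proof (intro exI[of _ "1/c2"] ballI)
    fix x :: real assume "x \<in> {0..1}"
    then have "c2 * b x \<le> \<bar>x - x0\<bar> powr K2" using h by auto
    then show "b x \<le> 1 / c2 * \<bar>x - x0\<bar> powr K2" using c by (simp add: field_simps)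
  qed
qed

lemma ab_bounds:
  fixes a b :: "real \<Rightarrow> real" and x0 :: real
  assumes x0: "0 < x0" "x0 < 1"
    and z: "a x0 = 0" "b x0 = 0"
    and pos: "\<forall>x\<in>{0..1} - {x0}. a x > 0 \<and> b x > 0"
    and H: "H2 a b x0 \<or> H3 a b x0 \<or> H4 a b x0"
  shows "\<exists>e>0. \<exists>d>0. \<forall>x\<in>{0..1}. e * (x - x0)\<^sup>2 \<le> a x * b x \<and> a x * b x \<le> d * \<bar>x - x0\<bar>"
proof -
  have pa: "\<forall>x\<in>{0..1}-{x0}. a x > 0" and pb: "\<forall>x\<in>{0..1}-{x0}. b x > 0" using pos by auto
  from H consider "H2 a b x0" | "H3 a b x0" | "H4 a b x0" by blast
  then show ?thesis
  proof cases
    case 1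
    then obtain K1 K2 where W: "weakly_deg a x0 K1" "weakly_deg b x0 K2"
      and K: "1 \<le> K1 + K2" "K1 + K2 \<le> 2" and pbd: "power_bounds a b x0 K1 K2"
      unfolding H2_def WWD_def by blast
    have Kp: "0 < K1" "0 < K2" using W unfolding weakly_deg_def by auto
    obtain c1 where "c1 > 0" "\<forall>x\<in>{0..1}. c1 * \<bar>x - x0\<bar> powr K1 \<le> a x" using low_weak[OF x0 z(1) pa W(1)] by blast
    moreover obtain c2 where "c2 > 0" "\<forall>x\<in>{0..1}. c2 * \<bar>x - x0\<bar> powr K2 \<le> b x" using low_weak[OF x0 z(2) pb W(2)] by blast
    moreover obtain D1 where "\<forall>x\<in>{0..1}. a x \<le> D1 * \<bar>x - x0\<bar> powr K1" using up_pb(1)[OF pbd] by blast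
    moreover obtain D2 where "\<forall>x\<in>{0..1}. b x \<le> D2 * \<bar>x - x0\<bar> powr K2" using up_pb(2)[OF pbd] by blast
    ultimately show ?thesis using combine_bounds[OF x0 K Kp] by blast
  next
    case 2
    then obtain K1 K2 where W: "(weakly_deg a x0 K1 \<and> strongly_deg b x0 K2) \<or> (strongly_deg a x0 K1 \<and> weakly_deg b x0 K2)"
      and K: "K1 + K2 \<le> 2" and pbd: "power_bounds a b x0 K1 K2"
      unfolding H3_def WSD_def SWD_def by blast
    have Kp: "0 < K1" "0 < K2" "1 \<le> K1 + K2" using W unfolding weakly_deg_def strongly_deg_def by auto
    obtain c1 where "c1 > 0" "\<forall>x\<in>{0..1}. c1 * \<bar>x - x0\<bar> powr K1 \<le> a x"
      using W low_weak[OF x0 z(1) pa] low_strong[OF x0 z(1) pa] by blast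
    moreover obtain c2 where "c2 > 0" "\<forall>x\<in>{0..1}. c2 * \<bar>x - x0\<bar> powr K2 \<le> b x"
      using W low_weak[OF x0 z(2) pb] low_strong[OF x0 z(2) pb] by blast
    moreover obtain D1 where "\<forall>x\<in>{0..1}. a x \<le> D1 * \<bar>x - x0\<bar> powr K1" using up_pb(1)[OF pbd] by blast
    moreover obtain D2 where "\<forall>x\<in>{0..1}. b x \<le> D2 * \<bar>x - x0\<bar> powr K2" using up_pb(2)[OF pbd] by blast
    ultimately show ?thesis using combine_bounds[OF x0 Kp(3) K Kp(1,2)] by blast
  next
    case 3
    then have W: "strongly_deg a x0 1" "strongly_deg b x0 1" unfolding H4_def SSD_def by auto
    have K: "1 \<le> (1::real) + 1" "(1::real) + 1 \<le> 2" "0 < (1::real)" by auto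
    obtain c1 where "c1 > 0" "\<forall>x\<in>{0..1}. c1 * \<bar>x - x0\<bar> powr 1 \<le> a x" using low_strong[OF x0 z(1) pa W(1)] by blast
    moreover obtain c2 where "c2 > 0" "\<forall>x\<in>{0..1}. c2 * \<bar>x - x0\<bar> powr 1 \<le> b x" using low_strong[OF x0 z(2) pb W(2)] by blast
    moreover obtain D1 where "\<forall>x\<in>{0..1}. a x \<le> D1 * \<bar>x - x0\<bar> powr 1" using up_strong[OF x0 z(1) W(1)] by blast
    moreover obtain D2 where "\<forall>x\<in>{0..1}. b x \<le> D2 * \<bar>x - x0\<bar> powr 1" using up_strong[OF x0 z(2) W(2)] by blast
    ultimately show ?thesis using combine_bounds[OF x0 K(1,2) K(3) K(3)] by blast
  qed
qed


lemma main_ineq: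
  fixes a b u g :: "real \<Rightarrow> real" and x0 e d :: real
  assumes x0: "0 < x0" "x0 < 1" and e: "e > 0" and d: "d > 0"
    and ed: "\<forall>x\<in>{0..1}. e * (x - x0)\<^sup>2 \<le> a x * b x \<and> a x * b x \<le> d * \<bar>x - x0\<bar>"
    and H1: "H1_01 u g"
    and fi: "(\<lambda>x. (u x)\<^sup>2 / (a x * b x)) integrable_on {0..1}"
  shows "integral {0..1} (\<lambda>x. (u x)\<^sup>2 / (a x * b x)) \<le> 8/e * integral {0..1} (\<lambda>x. (g x)\<^sup>2)"
proof -
  have wd: "weak_deriv_01 u g" and g2: "(\<lambda>x. (g x)\<^sup>2) integrable_on {0..1}"
    using H1 unfolding H1_01_def by auto
  have uc: "continuous_on {0..1} u" by (rule wd_cont[OF wd])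
  have abnn: "\<forall>x\<in>{0..1}. a x * b x \<ge> 0"
  proof
    fix x :: real assume x: "x \<in> {0..1}"
    have "0 \<le> e * (x - x0)\<^sup>2" using e by simp
    then show "a x * b x \<ge> 0" using ed x by (meson order_trans)
  qed
  have abpos: "\<forall>x\<in>{0..1}-{x0}. a x * b x > 0"
  proof
    fix x :: real assume x: "x \<in> {0..1}-{x0}"
    have "0 < e * (x - x0)\<^sup>2" using e x by simp
    then show "a x * b x > 0" using ed x by (meson DiffD1 less_le_trans)
  qed
  have ux0: "u x0 = 0" by (rule u_zero[OF x0 d _ abpos abnn uc fi]) (use ed in auto)
  have gai: "g absolutely_integrable_on {0..1}" using wd unfolding weak_deriv_01_def by auto
  have gi: "g integrable_on {0..1}" and gni: "(\<lambda>x. \<bar>g x\<bar>) integrable_on {0..1}"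
    using gai unfolding absolutely_integrable_on_def by auto
  have "(\<lambda>x. indicator {0..1} x *\<^sub>R g x) \<in> lebesgue \<rightarrow>\<^sub>M borel"
    by (rule has_integral_implies_lebesgue_measurable[OF integrable_integral[OF gi]])
  then obtain h where hm: "h \<in> borel_measurable lborel" and hAE: "AE x in lborel. indicator {0..1} x * g x = h x"
    using completion_ex_borel_measurable_real by fastforce
  have hb[measurable]: "h \<in> borel_measurable borel" using hm by simp
  define G where "G = integral {0..1} (\<lambda>x. (g x)\<^sup>2)"
  have G0: "0 \<le> G" unfolding G_def by (rule integral_nonneg[OF g2]) auto
  have Hh: "(\<integral>\<^sup>+x. ennreal ((h x)\<^sup>2) \<partial>lborel) = ennreal G"
  proof -
    have "(\<integral>\<^sup>+x. ennreal ((h x)\<^sup>2) \<partial>lborel) = (\<integral>\<^sup>+x. ennreal ((g x)\<^sup>2) * indicator {0..1} x \<partial>lborel)"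
      using hAE by (intro nn_integral_cong_AE) (auto elim!: eventually_mono split: split_indicator)
    also have "\<dots> = ennreal G"
      unfolding G_def by (rule nn_integral_has_integral_lebesgue') (auto intro: integrable_integral[OF g2])
    finally show ?thesis .
  qed
  have incr: "ennreal \<bar>u y - u x\<bar> \<le> (\<integral>\<^sup>+t. ennreal (indicator {x<..y} t * \<bar>h t\<bar>) \<partial>lborel) \<and>
      ennreal \<bar>u y - u x\<bar> \<le> (\<integral>\<^sup>+t. ennreal (indicator {x..<y} t * \<bar>h t\<bar>) \<partial>lborel)"
    if xy: "0 \<le> x" "x \<le> y" "y \<le> 1" for x y
  proof -
    have d1: "u y - u x = integral {x..y} g" "g integrable_on {x..y}" using wd_diff[OF wd xy] by auto
    have ai: "(\<lambda>t. \<bar>g t\<bar>) integrable_on {x..y}" using integrable_on_subinterval[OF gni] xy by auto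
    have "norm (integral {x..y} g) \<le> integral {x..y} (\<lambda>t. \<bar>g t\<bar>)"
      using integral_norm_bound_integral[OF d1(2) ai] by simp
    then have le1: "ennreal \<bar>u y - u x\<bar> \<le> ennreal (integral {x..y} (\<lambda>t. \<bar>g t\<bar>))"
      unfolding d1(1) by (intro ennreal_leI) simp
    have eq1: "ennreal (integral {x..y} (\<lambda>t. \<bar>g t\<bar>)) = (\<integral>\<^sup>+t. ennreal \<bar>g t\<bar> * indicator {x..y} t \<partial>lborel)"
      by (rule nn_integral_has_integral_lebesgue'[symmetric]) (auto intro: integrable_integral[OF ai])
    have eq2: "(\<integral>\<^sup>+t. ennreal \<bar>g t\<bar> * indicator {x..y} t \<partial>lborel) = (\<integral>\<^sup>+t. ennreal (indicator {x<..y} t * \<bar>h t\<bar>) \<partial>lborel)"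
    proof (rule nn_integral_cong_AE)
      show "AE t in lborel. ennreal \<bar>g t\<bar> * indicator {x..y} t = ennreal (indicator {x<..y} t * \<bar>h t\<bar>)"
        using hAE AE_lborel_singleton[of x]
      proof eventually_elim
        case (elim t)
        show ?case using elim xy by (auto split: split_indicator)
      qed
    qed
    have eq3: "(\<integral>\<^sup>+t. ennreal \<bar>g t\<bar> * indicator {x..y} t \<partial>lborel) = (\<integral>\<^sup>+t. ennreal (indicator {x..<y} t * \<bar>h t\<bar>) \<partial>lborel)"
    proof (rule nn_integral_cong_AE)
      show "AE t in lborel. ennreal \<bar>g t\<bar> * indicator {x..y} t = ennreal (indicator {x..<y} t * \<bar>h t\<bar>)"
        using hAE AE_lborel_singleton[of y]
      proof eventually_elim
        case (elim t)
        show ?case using elim xy by (auto split: split_indicator)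
      qed
    qed
    show ?thesis using le1 eq1 eq2 eq3 by simp
  qed
  have R: "(\<integral>\<^sup>+x. ennreal (indicator {x0<..1} x * ((u x)\<^sup>2 / (x - x0)\<^sup>2)) \<partial>lborel) \<le> 4 * ennreal G"
  proof -
    have "(\<integral>\<^sup>+x. ennreal (indicator {x0<..1} x * ((u x)\<^sup>2 / (x - x0)\<^sup>2)) \<partial>lborel) \<le> 4 * (\<integral>\<^sup>+t. ennreal ((h t)\<^sup>2) \<partial>lborel)"
    proof (rule hardy_right[OF _ hb])
      show "x0 < 1" by (rule x0(2))
      fix x assume x: "x0 < x" "x \<le> 1"
      then show "ennreal \<bar>u x\<bar> \<le> (\<integral>\<^sup>+t. ennreal (indicator {x0<..x} t * \<bar>h t\<bar>) \<partial>lborel)"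
        using incr[of x0 x] x0 ux0 by auto
    qed
    then show ?thesis using Hh by simp
  qed
  have phim[measurable]: "(\<lambda>x. ennreal (indicator {0..<x0} x * ((u x)\<^sup>2 / (x0 - x)\<^sup>2))) \<in> borel_measurable borel"
  proof -
    have "continuous_on {0..<x0} (\<lambda>x. (u x)\<^sup>2 / (x0 - x)\<^sup>2)"
      using x0 by (intro continuous_intros continuous_on_subset[OF uc]) auto
    then have "(\<lambda>x. indicator {0..<x0} x *\<^sub>R ((u x)\<^sup>2 / (x0 - x)\<^sup>2)) \<in> borel_measurable borel"
      by (intro borel_measurable_continuous_on_indicator) auto
    then show ?thesis by simp
  qed
  have psim[measurable]: "(\<lambda>x. ennreal (indicator {x0<..1} x * ((u x)\<^sup>2 / (x - x0)\<^sup>2))) \<in> borel_measurable borel"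
  proof -
    have "continuous_on {x0<..1} (\<lambda>x. (u x)\<^sup>2 / (x - x0)\<^sup>2)"
      using x0 by (intro continuous_intros continuous_on_subset[OF uc]) auto
    then have "(\<lambda>x. indicator {x0<..1} x *\<^sub>R ((u x)\<^sup>2 / (x - x0)\<^sup>2)) \<in> borel_measurable borel"
      by (intro borel_measurable_continuous_on_indicator) auto
    then show ?thesis by simp
  qed
  have L: "(\<integral>\<^sup>+x. ennreal (indicator {0..<x0} x * ((u x)\<^sup>2 / (x0 - x)\<^sup>2)) \<partial>lborel) \<le> 4 * ennreal G"
  proof -
    have hr[measurable]: "(\<lambda>t. h (-t)) \<in> borel_measurable borel" by measurable
    have "(\<integral>\<^sup>+s. ennreal (indicator {-x0<..0} s * ((u (-s))\<^sup>2 / (s - -x0)\<^sup>2)) \<partial>lborel) \<le> 4 * (\<integral>\<^sup>+t. ennreal ((h (-t))\<^sup>2) \<partial>lborel)"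
    proof (rule hardy_right[OF _ hr])
      show "-x0 < 0" using x0 by simp
      fix s assume s: "-x0 < s" "s \<le> 0"
      have "ennreal \<bar>u (-s)\<bar> \<le> (\<integral>\<^sup>+t. ennreal (indicator {-s..<x0} t * \<bar>h t\<bar>) \<partial>lborel)"
        using incr[of "-s" x0] s x0 ux0 by auto
      also have "\<dots> = (\<integral>\<^sup>+t. ennreal (indicator {-x0<..s} t * \<bar>h (-t)\<bar>) \<partial>lborel)"
      proof -
        have m: "(\<lambda>t. ennreal (indicator {-s..<x0} t * \<bar>h t\<bar>)) \<in> borel_measurable borel" by measurable
        have "(\<integral>\<^sup>+t. ennreal (indicator {-s..<x0} t * \<bar>h t\<bar>) \<partial>lborel) =
           (\<integral>\<^sup>+t. ennreal (indicator {-s..<x0} (- t) * \<bar>h (- t)\<bar>) \<partial>lborel)"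
          using nn_integral_real_affine[OF m, of "-1" 0] by simp
        also have "\<dots> = (\<integral>\<^sup>+t. ennreal (indicator {-x0<..s} t * \<bar>h (-t)\<bar>) \<partial>lborel)"
          by (intro nn_integral_cong) (auto split: split_indicator)
        finally show ?thesis .
      qed
      finally show "ennreal \<bar>u (-s)\<bar> \<le> (\<integral>\<^sup>+t. ennreal (indicator {-x0<..s} t * \<bar>h (-t)\<bar>) \<partial>lborel)" .
    qed
    moreover have "(\<integral>\<^sup>+t. ennreal ((h (-t))\<^sup>2) \<partial>lborel) = (\<integral>\<^sup>+t. ennreal ((h t)\<^sup>2) \<partial>lborel)"
      using nn_integral_real_affine[of "\<lambda>t. ennreal ((h t)\<^sup>2)" "-1" 0] by simp
    moreover have "(\<integral>\<^sup>+x. ennreal (indicator {0..<x0} x * ((u x)\<^sup>2 / (x0 - x)\<^sup>2)) \<partial>lborel) =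
        (\<integral>\<^sup>+s. ennreal (indicator {-x0<..0} s * ((u (-s))\<^sup>2 / (s - -x0)\<^sup>2)) \<partial>lborel)"
    proof -
      have "(\<integral>\<^sup>+x. ennreal (indicator {0..<x0} x * ((u x)\<^sup>2 / (x0 - x)\<^sup>2)) \<partial>lborel) =
         (\<integral>\<^sup>+s. ennreal (indicator {0..<x0} (- s) * ((u (- s))\<^sup>2 / (x0 - (- s))\<^sup>2)) \<partial>lborel)"
        using nn_integral_real_affine[OF phim, of "-1" 0] by simp
      also have "\<dots> = (\<integral>\<^sup>+s. ennreal (indicator {-x0<..0} s * ((u (-s))\<^sup>2 / (s - -x0)\<^sup>2)) \<partial>lborel)"
        by (intro nn_integral_cong) (auto split: split_indicator simp: add.commute)
      finally show ?thesis .
    qed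
    ultimately show ?thesis using Hh by simp
  qed
  define f where "f x = (u x)\<^sup>2 / (a x * b x)" for x
  define \<psi> where "\<psi> x = ennreal (indicator {x0<..1} x * ((u x)\<^sup>2 / (x - x0)\<^sup>2))" for x
  define \<phi> where "\<phi> x = ennreal (indicator {0..<x0} x * ((u x)\<^sup>2 / (x0 - x)\<^sup>2))" for x
  have pw: "ennreal (f x) * indicator {0..1} x \<le> ennreal (1/e) * (\<psi> x + \<phi> x)" for x
  proof -
    consider "x \<notin> {0..1}" | "x = x0" | "x \<in> {0..1}" "x0 < x" | "x \<in> {0..1}" "x < x0" by force
    then show ?thesis
    proof cases
      case 1 then show ?thesis by simp
    next
      case 2 then show ?thesis by (simp add: f_def ux0)
    next
      case 3
      have ab: "e * (x - x0)\<^sup>2 \<le> a x * b x" using ed 3 by auto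
      have ep: "0 < e * (x - x0)\<^sup>2" using e 3 by simp
      have "f x \<le> (u x)\<^sup>2 / (e * (x - x0)\<^sup>2)"
        unfolding f_def using ab ep by (intro divide_left_mono) auto
      also have "\<dots> = 1/e * (indicator {x0<..1} x * ((u x)\<^sup>2 / (x - x0)\<^sup>2))" using 3 by simp
      finally have "ennreal (f x) \<le> ennreal (1/e) * \<psi> x"
        unfolding \<psi>_def using e by (simp add: ennreal_mult[symmetric] ennreal_leI)
      also have "\<dots> \<le> ennreal (1/e) * (\<psi> x + \<phi> x)" by (intro mult_left_mono) auto
      finally show ?thesis using 3 by simp
    next
      case 4
      have ab: "e * (x - x0)\<^sup>2 \<le> a x * b x" using ed 4 by auto
      have ep: "0 < e * (x - x0)\<^sup>2" using e 4 by simp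
      have "f x \<le> (u x)\<^sup>2 / (e * (x - x0)\<^sup>2)"
        unfolding f_def using ab ep by (intro divide_left_mono) auto
      also have "\<dots> = 1/e * (indicator {0..<x0} x * ((u x)\<^sup>2 / (x0 - x)\<^sup>2))" using 4 by (simp add: power2_commute)
      finally have "ennreal (f x) \<le> ennreal (1/e) * \<phi> x"
        unfolding \<phi>_def using e by (simp add: ennreal_mult[symmetric] ennreal_leI)
      also have "\<dots> \<le> ennreal (1/e) * (\<psi> x + \<phi> x)" by (intro mult_left_mono) auto
      finally show ?thesis using 4 by simp
    qed
  qed
  have fnn: "\<And>x. x \<in> {0..1} \<Longrightarrow> 0 \<le> f x" unfolding f_def using abnn by auto
  have "ennreal (integral {0..1} f) = (\<integral>\<^sup>+x. ennreal (f x) * indicator {0..1} x \<partial>lborel)"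
  proof -
    have fi': "f integrable_on {0..1}" using fi unfolding f_def .
    show ?thesis by (rule nn_integral_has_integral_lebesgue'[symmetric]) (use fnn integrable_integral[OF fi'] in auto)
  qed
  also have "\<dots> \<le> (\<integral>\<^sup>+x. ennreal (1/e) * (\<psi> x + \<phi> x) \<partial>lborel)"
    by (intro nn_integral_mono pw)
  also have "\<dots> = ennreal (1/e) * ((\<integral>\<^sup>+x. \<psi> x \<partial>lborel) + (\<integral>\<^sup>+x. \<phi> x \<partial>lborel))"
  proof -
    have pm: "\<psi> \<in> borel_measurable lborel" "\<phi> \<in> borel_measurable lborel"
      unfolding \<psi>_def \<phi>_def using psim phim by simp_all
    have "(\<integral>\<^sup>+x. ennreal (1/e) * (\<psi> x + \<phi> x) \<partial>lborel) = ennreal (1/e) * (\<integral>\<^sup>+x. (\<psi> x + \<phi> x) \<partial>lborel)"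
      by (rule nn_integral_cmult) (use pm in measurable)
    also have "(\<integral>\<^sup>+x. (\<psi> x + \<phi> x) \<partial>lborel) = (\<integral>\<^sup>+x. \<psi> x \<partial>lborel) + (\<integral>\<^sup>+x. \<phi> x \<partial>lborel)"
      by (rule nn_integral_add) (use pm in auto)
    finally show ?thesis .
  qed
  also have "\<dots> \<le> ennreal (1/e) * (4 * ennreal G + 4 * ennreal G)"
    unfolding \<psi>_def \<phi>_def by (intro mult_left_mono add_mono R L) auto
  also have "\<dots> = ennreal (8/e * G)"
  proof -
    have "4 * ennreal G + 4 * ennreal G = (4 + 4) * ennreal G" by (rule distrib_right[symmetric])
    also have "(4 + 4 :: ennreal) = 8" by simp
    also have "(8 :: ennreal) * ennreal G = ennreal (8 * G)" using G0 by (simp add: ennreal_mult)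
    finally have "4 * ennreal G + 4 * ennreal G = ennreal (8 * G)" .
    then show ?thesis using e G0 by (simp add: ennreal_mult[symmetric])
  qed
  finally have "ennreal (integral {0..1} f) \<le> ennreal (8/e * G)" .
  then have "integral {0..1} f \<le> 8/e * G"
    using e G0 by (subst (asm) ennreal_le_iff) auto
  then show ?thesis unfolding f_def G_def .
qed


theorem lemma2p12:
  fixes a b :: "real \<Rightarrow> real" and x0 :: real
  assumes "0 < x0" "x0 < 1"
    and "a x0 = 0" "b x0 = 0"
    and "\<forall>x\<in>{0..1} - {x0}. a x > 0 \<and> b x > 0"
    and "H2 a b x0 \<or> H3 a b x0 \<or> H4 a b x0"
  shows "\<exists>C>0. \<forall>u g. H1_01 u g
      \<and> (\<lambda>x. (u x)\<^sup>2 / a x) integrable_on {0..1}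
      \<and> (\<lambda>x. (u x)\<^sup>2 / (a x * b x)) integrable_on {0..1}
      \<and> (u has_real_derivative 0) (at 0 within {0..1})
      \<and> (u has_real_derivative 0) (at 1 within {0..1})
      \<longrightarrow> integral {0..1} (\<lambda>x. (u x)\<^sup>2 / (a x * b x)) \<le> C * integral {0..1} (\<lambda>x. (g x)\<^sup>2)"
proof -
  obtain e d where e: "e > 0" "d > 0"
    and ed: "\<forall>x\<in>{0..1}. e * (x - x0)\<^sup>2 \<le> a x * b x \<and> a x * b x \<le> d * \<bar>x - x0\<bar>"
    using ab_bounds[OF assms] by blast
  have "8/e > 0" using e by simp
  moreover have "\<forall>u g. H1_01 u g
      \<and> (\<lambda>x. (u x)\<^sup>2 / a x) integrable_on {0..1}
      \<and> (\<lambda>x. (u x)\<^sup>2 / (a x * b x)) integrable_on {0..1}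
      \<and> (u has_real_derivative 0) (at 0 within {0..1})
      \<and> (u has_real_derivative 0) (at 1 within {0..1})
      \<longrightarrow> integral {0..1} (\<lambda>x. (u x)\<^sup>2 / (a x * b x)) \<le> 8/e * integral {0..1} (\<lambda>x. (g x)\<^sup>2)"
    using main_ineq[OF assms(1,2) e ed] by blast
  ultimately show ?thesis by blast
qed

end
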